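(* Let $C$ be a curve smooth at $O$ and let $f\in\mathbb C(x,y)\setminus\{0\}$ be regular at $O$. Then: (i) the function $s\mapsto v_1(C,s;f)$ is continuous on $[1,+\infty)$, piecewise linear, non-decreasing and concave, and its graph consists of finitely many linear pieces with rational slopes, their number being one more than the number of edges of the Newton polygon $\operatorname{NP}(C,f)$ of slope greater than $-1$; (ii) the points where the derivative of $s\mapsto v_1(C,s;f)$ is not defined are $s_k=-1/\operatorname{sl}(\mathfrak l_k)$, $k=1,\dots,h$; (iii) if the curve $V:\ f=0$ does not contain $C$, then $v_1(C,s;f)=(V,C)_O$ (local intersection multiplicity at $O$) for all $s\gg1$.
   Context: Work over $\mathbb C$, with affine coordinates $x,y$ on $\mathbb A^2\subset\mathbb P^2$ and $O=(0,0)$. $C$ is a curve through $O$, smooth at $O$, with coordinates chosen so that $C$ is tangent to $\{y=0\}$; near $O$ it is parametrized as $x\mapsto(x,\xi(x))$ with $\xi\in\mathbb C[[x]]$, $\xi(0)=\xi'(0)=0$. Every nonzero $f$ has a $C$-expansion $f=\sum a_{ij}x^i(y-\xi(x))^j$, and for real $s\ge1$, $v_1(C,s;f)=\min\{i+sj: a_{ij}\ne0\}$. The Newton polygon $\operatorname{NP}(C,f)$ is the compact part of the boundary of the convex hull of $\bigcup_{a_{ij}\neq0}((i,j)+\mathbb R_{\ge0}^2)$; it is a polygonal chain with vertices $\mathfrak v_0,\dots,\mathfrak v_h$ ordered left to right and edges $\mathfrak l_k=[\mathfrak v_{k-1},\mathfrak v_k]$, $k=1,\dots,h$, with slopes $\operatorname{sl}(\mathfrak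 l_k)$. *)

theory Defs
  imports "HOL-Analysis.Analysis" "HOL-Computational_Algebra.Computational_Algebra"
begin

text \<open>Polynomials in \<open>x,y\<close> are encoded as \<open>complex poly poly\<close>: the outer variable is \<open>y\<close>,
  the coefficients are polynomials in \<open>x\<close>. A rational function \<open>f\<close> regular at \<open>O\<close> is given
  as \<open>f = p / q\<close> with \<open>q(O) \<noteq> 0\<close>. The curve \<open>C\<close> is given near \<open>O\<close> by its branch \<open>y = \<xi>(x)\<close>.\<close>

definition eval_O :: "complex poly poly \<Rightarrow> complex" where
  "eval_O P = poly (poly P 0) 0"

definition restrict_C :: "complex fps \<Rightarrow> complex poly poly \<Rightarrow> complex fps" where
  "restrict_C \<xi> P = poly (map_poly fps_of_poly P) \<xi>"

text \<open>\<open>C\<close> is an algebraic curve through \<open>O\<close>, smooth at \<open>O\<close>, tangent to \<open>y = 0\<close>,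
  with branch \<open>x \<mapsto> (x, \<xi>(x))\<close>.\<close>
definition curve_branch :: "complex fps \<Rightarrow> bool" where
  "curve_branch \<xi> \<longleftrightarrow> fps_nth \<xi> 0 = 0 \<and> fps_nth \<xi> 1 = 0 \<and>
     (\<exists>g :: complex poly poly. g \<noteq> 0 \<and> restrict_C \<xi> g = 0)"

text \<open>\<open>P(x, w + \<xi>(x))\<close> as a double formal power series: outer variable \<open>w = y - \<xi>(x)\<close>,
  inner variable \<open>x\<close>; the coefficient of \<open>x^i w^j\<close> is \<open>(A $ j) $ i\<close>.\<close>
definition C_subst :: "complex fps \<Rightarrow> complex poly poly \<Rightarrow> complex fps fps" where
  "C_subst \<xi> P = poly (map_poly (\<lambda>c. fps_const (fps_of_poly c)) P) (fps_const \<xi> + fps_X)"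

definition C_expansion :: "complex fps \<Rightarrow> complex poly poly \<Rightarrow> complex poly poly \<Rightarrow> complex fps fps" where
  "C_expansion \<xi> p q = (THE A. C_subst \<xi> q * A = C_subst \<xi> p)"

definition C_coeff :: "complex fps \<Rightarrow> complex poly poly \<Rightarrow> complex poly poly \<Rightarrow> nat \<Rightarrow> nat \<Rightarrow> complex" where
  "C_coeff \<xi> p q i j = fps_nth (fps_nth (C_expansion \<xi> p q) j) i"

definition v1 :: "complex fps \<Rightarrow> complex poly poly \<Rightarrow> complex poly poly \<Rightarrow> real \<Rightarrow> real" where
  "v1 \<xi> p q s = Inf {real i + s * real j | i j. C_coeff \<xi> p q i j \<noteq> 0}"

definition newton_polyhedron :: "complex fps \<Rightarrow> complex poly poly \<Rightarrow> complex poly poly \<Rightarrow> (real \<times> real) set" where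
  "newton_polyhedron \<xi> p q = convex hull
     (\<Union>(i, j) \<in> {(i, j). C_coeff \<xi> p q i j \<noteq> 0}. {(real i + u, real j + v) | u v. u \<ge> 0 \<and> v \<ge> 0})"

definition NP_vertices :: "complex fps \<Rightarrow> complex poly poly \<Rightarrow> complex poly poly \<Rightarrow> (real \<times> real) set" where
  "NP_vertices \<xi> p q = {z. z extreme_point_of newton_polyhedron \<xi> p q}"

definition NP_edges :: "complex fps \<Rightarrow> complex poly poly \<Rightarrow> complex poly poly \<Rightarrow> ((real \<times> real) \<times> (real \<times> real)) set" where
  "NP_edges \<xi> p q = {(a, b). a \<in> NP_vertices \<xi> p q \<and> b \<in> NP_vertices \<xi> p q \<and> fst a < fst b \<and>
      \<not> (\<exists>c \<in> NP_vertices \<xi> p q. fst a < fst c \<and> fst c < fst b)}"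

definition edge_slope :: "(real \<times> real) \<times> (real \<times> real) \<Rightarrow> real" where
  "edge_slope e = (snd (snd e) - snd (fst e)) / (fst (snd e) - fst (fst e))"

text \<open>Local intersection multiplicity \<open>(V,C)_O\<close> for \<open>C\<close> smooth at \<open>O\<close>:
  the order in \<open>x\<close> of \<open>f(x, \<xi>(x))\<close>.\<close>
definition int_mult_smooth :: "complex fps \<Rightarrow> complex poly poly \<Rightarrow> complex poly poly \<Rightarrow> nat" where
  "int_mult_smooth \<xi> p q = subdegree (restrict_C \<xi> p / restrict_C \<xi> q)"

end

theory Submission
  imports Defs
begin


lemma C_subst_eq:
  "C_subst \<xi> P = fps_of_poly (map_poly fps_of_poly P \<circ>\<^sub>p [:\<xi>, 1:])"
proof (induction P)
  case 0 then show ?case by (simp add: C_subst_def)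
next
  case (pCons c P)
  have h: "fps_of_poly [:\<xi>, 1:] = fps_const \<xi> + fps_X"
    by (simp add: fps_of_poly_pCons fps_of_poly_const)
  show ?case using pCons
    by (simp add: C_subst_def map_poly_pCons pcompose_pCons fps_of_poly_add fps_of_poly_mult
        fps_of_poly_const h)
qed

lemma C_subst_nth0: "fps_nth (C_subst \<xi> P) 0 = restrict_C \<xi> P"
  by (simp add: C_subst_eq restrict_C_def)

lemma C_subst_nz: "P \<noteq> 0 \<Longrightarrow> C_subst \<xi> P \<noteq> 0"
proof -
  assume P: "P \<noteq> 0"
  have "map_poly fps_of_poly P \<noteq> 0"
    using P by (subst map_poly_eq_0_iff) (auto simp: fps_of_poly_eq_iff[of _ 0, simplified])
  moreover have "degree [:\<xi>, (1::complex fps):] > 0" by simp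
  ultimately have "map_poly fps_of_poly P \<circ>\<^sub>p [:\<xi>, 1:] \<noteq> 0"
    using pcompose_eq_0 by blast
  then show ?thesis by (simp add: C_subst_eq fps_of_poly_eq_iff[of _ 0, simplified])
qed

lemma restrict_C_nth0: "fps_nth \<xi> 0 = 0 \<Longrightarrow> fps_nth (restrict_C \<xi> P) 0 = eval_O P"
proof (induction P)
  case 0 then show ?case by (simp add: restrict_C_def eval_O_def)
next
  case (pCons c P)
  then show ?case
    by (simp add: restrict_C_def eval_O_def map_poly_pCons poly_0_coeff_0)
qed

lemma C_expansion_eq:
  assumes x0: "fps_nth \<xi> 0 = 0" and reg: "eval_O q \<noteq> 0"
  shows "C_subst \<xi> q * C_expansion \<xi> p q = C_subst \<xi> p"
proof -
  define Q where "Q = C_subst \<xi> q"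
  have U: "fps_nth (fps_nth Q 0) 0 \<noteq> 0" using reg x0 by (simp add: Q_def C_subst_nth0 restrict_C_nth0)
  have "fps_nth Q 0 * inverse (fps_nth Q 0) = 1" using U by (rule inverse_mult_eq_1')
  then have inv: "Q * fps_right_inverse Q (inverse (fps_nth Q 0)) = 1" by (rule fps_right_inverse)
  have Qnz: "Q \<noteq> 0" using U by auto
  define A where "A = fps_right_inverse Q (inverse (fps_nth Q 0)) * C_subst \<xi> p"
  have QA: "Q * A = C_subst \<xi> p" unfolding A_def by (simp add: mult.assoc[symmetric] inv)
  have "C_expansion \<xi> p q = A"
    unfolding C_expansion_def Q_def[symmetric]
  proof (rule the_equality)
    show "Q * A = C_subst \<xi> p" by (rule QA)
    fix B assume "Q * B = C_subst \<xi> p"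
    with QA have "Q * B = Q * A" by simp
    with Qnz show "B = A" by simp
  qed
  with QA show ?thesis by (simp add: Q_def)
qed



definition gv :: "nat \<times> nat \<Rightarrow> real \<Rightarrow> real" where
  "gv z s = real (fst z) + s * real (snd z)"

lemma gv_diff: "gv z t - gv w t = (gv z s - gv w s) + (t - s) * (real (snd z) - real (snd w))"
  by (simp add: gv_def algebra_simps)

lemma gv_cont: "continuous_on A (gv z)"
  unfolding gv_def by (intro continuous_intros)

lemma interval_lemma:
  fixes A B :: "real set"
  assumes "finite A" "finite B" "\<forall>a\<in>A. \<forall>b\<in>B. a < b" "\<forall>b\<in>B. 0 < b"
  shows "\<exists>s>0. (\<forall>a\<in>A. a < s) \<and> (\<forall>b\<in>B. s < b)"
proof -
  define lo where "lo = Max (insert 0 A)"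
  have lo: "0 \<le> lo" "\<forall>a\<in>A. a \<le> lo" using assms(1) by (auto simp: lo_def)
  have loin: "lo \<in> insert 0 A" using assms(1) unfolding lo_def by (intro Max_in) auto
  show ?thesis
  proof (cases "B = {}")
    case True
    then show ?thesis using lo by (intro exI[of _ "lo + 1"]) auto
  next
    case False
    define hi where "hi = Min B"
    have hi: "\<forall>b\<in>B. hi \<le> b" "hi \<in> B" using assms(2) False by (auto simp: hi_def)
    have "lo < hi" using loin hi assms(3,4) by auto
    then show ?thesis using lo hi by (intro exI[of _ "(lo + hi) / 2"]) fastforce
  qed
qed

locale NPF =
  fixes F :: "(nat \<times> nat) set"
  assumes finF: "finite F" and neF: "F \<noteq> {}"
begin

definition phi :: "real \<Rightarrow> real" where "phi s = Min ((\<lambda>z. gv z s) ` F)"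
definition act :: "real \<Rightarrow> (nat \<times> nat) set" where "act s = {z \<in> F. gv z s = phi s}"
definition bp :: "real \<Rightarrow> bool" where "bp s \<longleftrightarrow> (\<exists>z\<in>act s. \<exists>w\<in>act s. z \<noteq> w)"
definition strict :: "nat \<times> nat \<Rightarrow> real \<Rightarrow> bool" where
  "strict z s \<longleftrightarrow> z \<in> F \<and> (\<forall>w\<in>F. w \<noteq> z \<longrightarrow> gv z s < gv w s)"
definition V :: "(nat \<times> nat) set" where "V = {z. \<exists>s>0. strict z s}"

lemma phi_le: "z \<in> F \<Longrightarrow> phi s \<le> gv z s"
  unfolding phi_def using finF by (intro Min_le) auto

lemma phi_ex: "\<exists>z\<in>F. gv z s = phi s"
proof -
  have "phi s \<in> (\<lambda>z. gv z s) ` F" unfolding phi_def using finF neF by (intro Min_in) auto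
  then show ?thesis by force
qed

lemma act_ne: "act s \<noteq> {}" using phi_ex unfolding act_def by blast
lemma act_fin: "finite (act s)" using finF unfolding act_def by simp
lemma act_F: "z \<in> act s \<Longrightarrow> z \<in> F" unfolding act_def by simp
lemma act_gv: "z \<in> act s \<Longrightarrow> gv z s = phi s" unfolding act_def by simp
lemma act_I: "z \<in> F \<Longrightarrow> (\<And>w. w \<in> F \<Longrightarrow> gv z s \<le> gv w s) \<Longrightarrow> z \<in> act s"
  unfolding act_def using phi_ex by (metis (mono_tags, lifting) dual_order.antisym mem_Collect_eq phi_le)

lemma act_inj: "z \<in> act s \<Longrightarrow> w \<in> act s \<Longrightarrow> snd z = snd w \<Longrightarrow> z = w"
  by (auto simp: act_def gv_def intro: prod_eqI)

lemma phi_cont: "continuous_on A phi"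
proof -
  have "finite G \<Longrightarrow> G \<noteq> {} \<Longrightarrow> continuous_on A (\<lambda>s. Min ((\<lambda>z. gv z s) ` G))" for G
  proof (induction G rule: finite_ne_induct)
    case (singleton x) then show ?case by (simp add: gv_cont)
  next
    case (insert x G)
    have "(\<lambda>s. Min ((\<lambda>z. gv z s) ` insert x G)) = (\<lambda>s. min (gv x s) (Min ((\<lambda>z. gv z s) ` G)))"
      using insert by (auto simp: Min_insert)
    then show ?case using insert by (simp add: continuous_on_min gv_cont)
  qed
  then show ?thesis unfolding phi_def[abs_def] using finF neF by blast
qed

lemma act_minj: "\<exists>z\<in>act s. \<forall>w\<in>act s. snd z \<le> snd w"
proof -
  obtain z0 where "z0 \<in> act s" using act_ne by blast
  then obtain z where "z \<in> act s" "\<forall>w. w \<in> act s \<longrightarrow> snd z \<le> snd w"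
    using ex_has_least_nat[of "\<lambda>z. z \<in> act s" z0 snd] by blast
  then show ?thesis by blast
qed

lemma act_maxj: "\<exists>z\<in>act s. \<forall>w\<in>act s. snd w \<le> snd z"
proof -
  have "finite (snd ` act s)" "snd ` act s \<noteq> {}" using act_fin act_ne by auto
  then have "Max (snd ` act s) \<in> snd ` act s" by (rule Max_in)
  then obtain z where z: "z \<in> act s" "snd z = Max (snd ` act s)" by auto
  then have "\<forall>w\<in>act s. snd w \<le> snd z" using act_fin by auto
  with z show ?thesis by blast
qed

lemma LOC:
  assumes "z \<in> act s"
  shows "\<exists>d>0. \<forall>t. \<bar>t - s\<bar> < d \<longrightarrow> (\<forall>w\<in>F - act s. gv z t < gv w t)"
proof -
  have "\<forall>w\<in>F - act s. eventually (\<lambda>t. gv z t < gv w t) (nhds s)"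
  proof
    fix w assume w: "w \<in> F - act s"
    then have "gv z s < gv w s" using assms phi_le[of w s]
      by (auto simp: act_def)
    moreover have "((\<lambda>t. gv w t - gv z t) \<longlongrightarrow> gv w s - gv z s) (nhds s)"
      unfolding gv_def by (intro tendsto_intros filterlim_ident)
    ultimately have "eventually (\<lambda>t. gv w t - gv z t > 0) (nhds s)"
      by (intro order_tendstoD(1)) auto
    then show "eventually (\<lambda>t. gv z t < gv w t) (nhds s)" by (rule eventually_mono) auto
  qed
  then have "eventually (\<lambda>t. \<forall>w\<in>F - act s. gv z t < gv w t) (nhds s)"
    using finF by (intro eventually_ball_finite) auto
  then show ?thesis unfolding eventually_nhds_metric dist_real_def by blast
qed

lemma strict_right:
  assumes z: "z \<in> act s" and m: "\<forall>w\<in>act s. snd z \<le> snd w"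
  shows "\<exists>d>0. \<forall>t. s < t \<and> t < s + d \<longrightarrow> strict z t"
proof -
  obtain d where d: "d > 0" "\<forall>t. \<bar>t - s\<bar> < d \<longrightarrow> (\<forall>w\<in>F - act s. gv z t < gv w t)"
    using LOC[OF z] by blast
  have "strict z t" if t: "s < t" "t < s + d" for t
    unfolding strict_def
  proof (intro conjI ballI impI)
    show "z \<in> F" using z by (rule act_F)
    fix w assume w: "w \<in> F" "w \<noteq> z"
    show "gv z t < gv w t"
    proof (cases "w \<in> act s")
      case True
      then have "snd z < snd w" using m w act_inj[OF z True] by force
      then have "(t - s) * (real (snd w) - real (snd z)) > 0" using t by (intro mult_pos_pos) auto
      then show ?thesis using gv_diff[of w t z s] act_gv[OF z] act_gv[OF True] by linarith
    next
      case False then show ?thesis using d t w by auto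
    qed
  qed
  with d show ?thesis by blast
qed

lemma strict_left:
  assumes z: "z \<in> act s" and m: "\<forall>w\<in>act s. snd w \<le> snd z"
  shows "\<exists>d>0. \<forall>t. s - d < t \<and> t < s \<longrightarrow> strict z t"
proof -
  obtain d where d: "d > 0" "\<forall>t. \<bar>t - s\<bar> < d \<longrightarrow> (\<forall>w\<in>F - act s. gv z t < gv w t)"
    using LOC[OF z] by blast
  have "strict z t" if t: "s - d < t" "t < s" for t
    unfolding strict_def
  proof (intro conjI ballI impI)
    show "z \<in> F" using z by (rule act_F)
    fix w assume w: "w \<in> F" "w \<noteq> z"
    show "gv z t < gv w t"
    proof (cases "w \<in> act s")
      case True
      then have "snd w < snd z" using m w act_inj[OF z True] by force
      then have "(t - s) * (real (snd w) - real (snd z)) > 0" using t by (intro mult_neg_neg) auto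
      then show ?thesis using gv_diff[of w t z s] act_gv[OF z] act_gv[OF True] by linarith
    next
      case False then show ?thesis using d t w by auto
    qed
  qed
  with d show ?thesis by blast
qed

lemma strict_act: "strict z s \<Longrightarrow> z \<in> act s"
  by (rule act_I) (auto simp: strict_def less_imp_le)

lemma V_F: "z \<in> V \<Longrightarrow> z \<in> F" by (auto simp: V_def strict_def)

lemma V_incomp:
  assumes "v \<in> V" "w \<in> F" "w \<noteq> v" "fst w \<le> fst v" "snd w \<le> snd v"
  shows False
proof -
  obtain s where s: "s > 0" "strict v s" using assms(1) by (auto simp: V_def)
  then have "gv v s < gv w s" using assms by (auto simp: strict_def)
  moreover have "gv w s \<le> gv v s" using assms(4,5) s(1) unfolding gv_def
    by (intro add_mono mult_left_mono) auto
  ultimately show False by simp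
qed

lemma V_order:
  assumes v: "strict v sv" "sv > 0" and w: "strict w sw" "sw > 0" and "sv < sw" "v \<noteq> w"
  shows "snd w < snd v \<and> fst v < fst w"
proof -
  have a: "gv v sv < gv w sv" using v w assms(6) by (auto simp: strict_def)
  have b: "gv w sw < gv v sw" using v w assms(6) by (auto simp: strict_def)
  have "(sw - sv) * (real (snd v) - real (snd w)) > 0"
    using gv_diff[of v sw w sv] a b by simp
  then have j: "snd w < snd v" using assms(5) by (simp add: zero_less_mult_iff)
  have vV: "v \<in> V" using v by (auto simp: V_def)
  have "fst v < fst w"
  proof (rule ccontr)
    assume "\<not> fst v < fst w"
    then show False using V_incomp[OF vV, of w] w j assms(6) by (auto simp: strict_def)
  qed
  with j show ?thesis by simp
qed


definition cons :: "nat \<times> nat \<Rightarrow> nat \<times> nat \<Rightarrow> bool" where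
  "cons u w \<longleftrightarrow> u \<in> V \<and> w \<in> V \<and> fst u < fst w \<and> \<not> (\<exists>c\<in>V. fst u < fst c \<and> fst c < fst w)"

definition sval :: "nat \<times> nat \<Rightarrow> nat \<times> nat \<Rightarrow> real" where
  "sval u w = (real (fst w) - real (fst u)) / (real (snd u) - real (snd w))"

lemma cons_j: "cons u w \<Longrightarrow> snd w < snd u"
proof (rule ccontr)
  assume c: "cons u w" "\<not> snd w < snd u"
  then show False using V_incomp[of w u] V_F[of u] by (auto simp: cons_def)
qed

lemma eq_at_sval: "snd w < snd u \<Longrightarrow> gv u (sval u w) = gv w (sval u w)"
  by (simp add: gv_def sval_def field_simps)

lemma cons_su:
  assumes c: "cons u w" and su: "strict u su"
  shows "su < sval u w"
proof -
  have j: "snd w < snd u" using c by (rule cons_j)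
  have "w \<in> F" "w \<noteq> u" using c V_F by (auto simp: cons_def)
  then have "gv u su < gv w su" using su by (auto simp: strict_def)
  then have "(su - sval u w) * (real (snd u) - real (snd w)) < 0"
    using gv_diff[of u su w "sval u w"] eq_at_sval[OF j] by simp
  then show ?thesis using j by (simp add: mult_less_0_iff)
qed

lemma cons_sw:
  assumes c: "cons u w" and sw: "strict w sw"
  shows "sval u w < sw"
proof -
  have j: "snd w < snd u" using c by (rule cons_j)
  have "u \<in> F" "w \<noteq> u" using c V_F by (auto simp: cons_def)
  then have "gv w sw < gv u sw" using sw by (auto simp: strict_def)
  then have "(sw - sval u w) * (real (snd u) - real (snd w)) > 0"
    using gv_diff[of u sw w "sval u w"] eq_at_sval[OF j] by simp
  then show ?thesis using j by (simp add: zero_less_mult_iff)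
qed

lemma BP2:
  assumes c: "cons u w"
  shows "sval u w > 0 \<and> u \<in> act (sval u w) \<and> w \<in> act (sval u w)"
proof -
  define s where "s = sval u w"
  obtain su where su: "su > 0" "strict u su" using c by (auto simp: cons_def V_def)
  obtain sw where sw: "sw > 0" "strict w sw" using c by (auto simp: cons_def V_def)
  have ss: "su < s" "s < sw" using cons_su[OF c su(2)] cons_sw[OF c sw(2)] by (auto simp: s_def)
  have j: "snd w < snd u" using c by (rule cons_j)
  have eq: "gv u s = gv w s" using eq_at_sval[OF j] by (simp add: s_def)
  have uF: "u \<in> F" "w \<in> F" using c V_F by (auto simp: cons_def)
  have "u \<in> act s"
  proof (rule ccontr)
    assume nu: "u \<notin> act s"
    then have nw: "w \<notin> act s" using eq uF by (auto simp: act_def)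
    obtain m where m: "m \<in> act s" "\<forall>x\<in>act s. snd x \<le> snd m" using act_maxj by blast
    obtain d where d: "d > 0" "\<forall>t. s - d < t \<and> t < s \<longrightarrow> strict m t" using strict_left[OF m] by blast
    define t where "t = (max su (s - d) + s) / 2"
    have t: "su < t" "t < s" "s - d < t" using ss d(1) by (auto simp: t_def)
    have mt: "strict m t" using d t by auto
    have "m \<noteq> u" "m \<noteq> w" using m nu nw by auto
    then have "fst u < fst m" "fst m < fst w"
      using V_order[OF su(2) su(1) mt] V_order[OF mt _ sw(2) sw(1)] t ss su by auto
    moreover have "t > 0" using t su by linarith
    then have "m \<in> V" using mt unfolding V_def by blast
    ultimately show False using c by (auto simp: cons_def)
  qed
  moreover then have "w \<in> act s" using eq uF by (auto simp: act_def)
  ultimately show ?thesis using ss su by (simp add: s_def)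
qed

lemma cons_bounds:
  assumes c: "cons u w" and z: "z \<in> act (sval u w)"
  shows "snd w \<le> snd z \<and> snd z \<le> snd u"
proof -
  define s where "s = sval u w"
  obtain su where su: "su > 0" "strict u su" using c by (auto simp: cons_def V_def)
  obtain sw where sw: "sw > 0" "strict w sw" using c by (auto simp: cons_def V_def)
  have ss: "su < s" "s < sw" using cons_su[OF c su(2)] cons_sw[OF c sw(2)] by (auto simp: s_def)
  have ua: "u \<in> act s" "w \<in> act s" using BP2[OF c] by (auto simp: s_def)
  have zF: "z \<in> F" using z by (rule act_F)
  have zs: "gv z s = gv u s" "gv z s = gv w s" using ua z by (auto simp: act_def s_def)
  have "snd z \<le> snd u"
  proof (rule ccontr)
    assume "\<not> snd z \<le> snd u"
    then have "snd u < snd z" "z \<noteq> u" by auto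
    then have "(su - s) * (real (snd z) - real (snd u)) < 0" using ss by (simp add: mult_less_0_iff)
    then have "gv z su < gv u su" using gv_diff[of z su u s] zs by simp
    moreover have "gv u su < gv z su" using su \<open>z \<noteq> u\<close> zF by (auto simp: strict_def)
    ultimately show False by simp
  qed
  moreover have "snd w \<le> snd z"
  proof (rule ccontr)
    assume "\<not> snd w \<le> snd z"
    then have "snd z < snd w" "z \<noteq> w" by auto
    then have "(sw - s) * (real (snd z) - real (snd w)) < 0" using ss by (simp add: mult_less_0_iff)
    then have "gv z sw < gv w sw" using gv_diff[of z sw w s] zs by simp
    moreover have "gv w sw < gv z sw" using sw \<open>z \<noteq> w\<close> zF by (auto simp: strict_def)
    ultimately show False by simp
  qed
  ultimately show ?thesis by simp
qed

lemma cons_inj: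
  assumes "cons u w" "cons u' w'" "sval u w = sval u' w'"
  shows "u = u' \<and> w = w'"
proof -
  define s where "s = sval u w"
  have a: "u \<in> act s" "w \<in> act s" "u' \<in> act s" "w' \<in> act s"
    using BP2[OF assms(1)] BP2[OF assms(2)] assms(3) by (auto simp: s_def)
  have "snd u' \<le> snd u" "snd u \<le> snd u'" "snd w \<le> snd w'" "snd w' \<le> snd w"
    using cons_bounds[OF assms(1)] cons_bounds[OF assms(2)] a assms(3) by (auto simp: s_def)
  then show ?thesis using act_inj a by (metis antisym)
qed

lemma cons_bp: "cons u w \<Longrightarrow> bp (sval u w)"
proof -
  assume c: "cons u w"
  then have "u \<noteq> w" by (auto simp: cons_def)
  then show ?thesis using BP2[OF c] unfolding bp_def by blast
qed

lemma BP1: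
  assumes s: "s > 0" and b: "bp s"
  shows "\<exists>u w. cons u w \<and> s = sval u w"
proof -
  obtain u where u: "u \<in> act s" "\<forall>x\<in>act s. snd x \<le> snd u" using act_maxj by blast
  obtain w where w: "w \<in> act s" "\<forall>x\<in>act s. snd w \<le> snd x" using act_minj by blast
  obtain z1 z2 where z: "z1 \<in> act s" "z2 \<in> act s" "z1 \<noteq> z2" using b by (auto simp: bp_def)
  have "snd z1 \<noteq> snd z2" using act_inj z by blast
  then have j: "snd w < snd u"
  proof -
    assume ne: "snd z1 \<noteq> snd z2"
    have "snd w \<le> snd z1" "snd w \<le> snd z2" "snd z1 \<le> snd u" "snd z2 \<le> snd u" using u w z by auto
    then show ?thesis using ne by linarith
  qed
  obtain d1 where d1: "d1 > 0" "\<forall>t. s - d1 < t \<and> t < s \<longrightarrow> strict u t" using strict_left[OF u] by blast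
  obtain d2 where d2: "d2 > 0" "\<forall>t. s < t \<and> t < s + d2 \<longrightarrow> strict w t" using strict_right[OF w] by blast
  have "strict u (max (s/2) (s - d1/2))" using d1 s by (intro d1(2)[rule_format]) auto
  moreover have "max (s/2) (s - d1/2) > 0" using s by simp
  ultimately have uV: "u \<in> V" unfolding V_def by blast
  have "strict w (s + d2/2)" using d2 s by (intro d2(2)[rule_format]) auto
  then have wV: "w \<in> V" using s d2 by (auto simp: V_def intro!: exI[of _ "s + d2/2"])
  have eq: "gv u s = gv w s" using u w by (simp add: act_gv)
  then have sv: "s = sval u w" using j by (simp add: gv_def sval_def field_simps)
  have fi: "fst u < fst w"
  proof -
    have "real (fst u) - real (fst w) = s * (real (snd w) - real (snd u))" using eq
      by (simp add: gv_def algebra_simps)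
    also have "\<dots> < 0" using s j by (simp add: mult_pos_neg)
    finally show ?thesis by simp
  qed
  have "\<not> (\<exists>c\<in>V. fst u < fst c \<and> fst c < fst w)"
  proof
    assume "\<exists>c\<in>V. fst u < fst c \<and> fst c < fst w"
    then obtain c where c: "c \<in> V" "fst u < fst c" "fst c < fst w" by blast
    obtain sc where sc: "sc > 0" "strict c sc" using c by (auto simp: V_def)
    have cF: "c \<in> F" using c V_F by blast
    have uF: "u \<in> F" "w \<in> F" using u w act_F by auto
    have cu: "snd c < snd u"
    proof (rule ccontr)
      assume "\<not> snd c < snd u"
      then show False using V_incomp[OF c(1) uF(1)] c by auto
    qed
    have cw: "snd w < snd c"
    proof (rule ccontr)
      assume "\<not> snd w < snd c"
      then show False using V_incomp[OF wV cF] c by auto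
    qed
    have ge: "gv c s \<ge> gv u s" using phi_le[OF cF, of s] u by (simp add: act_gv)
    show False
    proof (cases "sc \<ge> s")
      case True
      have "(sc - s) * (real (snd c) - real (snd w)) \<ge> 0" using True cw by simp
      then have "gv c sc \<ge> gv w sc" using gv_diff[of c sc w s] ge eq by simp
      moreover have "gv c sc < gv w sc" using sc c uF by (auto simp: strict_def)
      ultimately show False by simp
    next
      case False
      have "(sc - s) * (real (snd c) - real (snd u)) > 0" using False cu by (simp add: mult_neg_neg)
      then have "gv c sc > gv u sc" using gv_diff[of c sc u s] ge by simp
      moreover have "gv c sc < gv u sc" using sc c uF by (auto simp: strict_def)
      ultimately show False by simp
    qed
  qed
  then have "cons u w" using uV wV fi by (simp add: cons_def)
  with sv show ?thesis by blast
qed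


lemma act_persist:
  assumes z: "z \<in> act s0" "\<forall>w\<in>act s0. snd z \<le> snd w" and le: "s0 \<le> s'"
    and nb: "\<forall>c. s0 < c \<and> c < s' \<longrightarrow> \<not> bp c"
  shows "z \<in> act s'"
proof (rule ccontr)
  assume nz: "z \<notin> act s'"
  have zF: "z \<in> F" using z act_F by blast
  have lt: "s0 < s'" using le nz z by (cases "s0 = s'") auto
  define W where "W = {w \<in> F. gv w s' < gv z s'}"
  have Wfin: "finite W" using finF by (simp add: W_def)
  obtain w0 where w0: "w0 \<in> F" "gv w0 s' = phi s'" using phi_ex by blast
  have "phi s' \<noteq> gv z s'" using nz zF by (auto simp: act_def)
  then have "w0 \<in> W" using w0 phi_le[OF zF, of s'] by (auto simp: W_def)
  then have Wne: "W \<noteq> {}" by blast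
  define D where "D = (\<lambda>w::nat\<times>nat. real (snd z) - real (snd w))"
  define dd where "dd = (\<lambda>w::nat\<times>nat. gv w s0 - gv z s0)"
  define cr where "cr = (\<lambda>w. s0 + dd w / D w)"
  have Wprop: "dd w > 0 \<and> D w > 0" if w: "w \<in> W" for w
  proof -
    have wF: "w \<in> F" using w by (simp add: W_def)
    have ge: "gv z s0 \<le> gv w s0" using phi_le[OF wF] act_gv[OF z(1)] by simp
    have dpos: "dd w > 0"
    proof (rule ccontr)
      assume "\<not> dd w > 0"
      then have "gv w s0 = phi s0" using ge act_gv[OF z(1)] by (simp add: dd_def)
      then have "w \<in> act s0" using wF by (simp add: act_def)
      then have "snd z \<le> snd w" using z(2) by blast
      then have "(s' - s0) * (real (snd w) - real (snd z)) \<ge> 0" using lt by simp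
      then have "gv w s' \<ge> gv z s'" using gv_diff[of w s' z s0] \<open>gv w s0 = phi s0\<close> act_gv[OF z(1)] by simp
      then show False using w by (simp add: W_def)
    qed
    have "gv w s' - gv z s' = dd w + (s' - s0) * (real (snd w) - real (snd z))"
      using gv_diff[of w s' z s0] by (simp add: dd_def)
    then have "(s' - s0) * (real (snd w) - real (snd z)) < 0" using w dpos by (simp add: W_def)
    then have "D w > 0" using lt by (simp add: D_def mult_less_0_iff)
    with dpos show ?thesis by simp
  qed
  have lin: "gv w t - gv z t = dd w - (t - s0) * D w" for w t
    using gv_diff[of w t z s0] by (simp add: dd_def D_def algebra_simps)
  obtain ws where ws: "ws \<in> W" "\<forall>w\<in>W. cr ws \<le> cr w"
  proof -
    have "Min (cr ` W) \<in> cr ` W" using Wfin Wne by (intro Min_in) auto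
    then obtain ws where "ws \<in> W" "cr ws = Min (cr ` W)" by auto
    moreover have "\<forall>w\<in>W. Min (cr ` W) \<le> cr w" using Wfin by auto
    ultimately show ?thesis using that by auto
  qed
  define c where "c = cr ws"
  have p: "dd ws > 0" "D ws > 0" using Wprop[OF ws(1)] by auto
  have cs0: "s0 < c" using p by (simp add: c_def cr_def)
  have eqc: "gv ws c = gv z c"
    using lin[of ws c] p by (simp add: c_def cr_def)
  have "gv ws s' - gv z s' < 0" using ws(1) by (simp add: W_def)
  then have "dd ws < (s' - s0) * D ws" using lin[of ws s'] by simp
  then have "dd ws / D ws < s' - s0" using p by (simp add: divide_less_eq)
  then have cs': "c < s'" by (simp add: c_def cr_def)
  have zc: "z \<in> act c"
  proof (rule act_I[OF zF])
    fix u assume uF: "u \<in> F"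
    show "gv z c \<le> gv u c"
    proof (rule ccontr)
      assume neg: "\<not> gv z c \<le> gv u c"
      have ge: "gv z s0 \<le> gv u s0" using phi_le[OF uF] act_gv[OF z(1)] by simp
      have "(c - s0) * (real (snd u) - real (snd z)) < 0"
        using gv_diff[of u c z s0] ge neg by simp
      then have uj: "snd u < snd z" using cs0 by (simp add: mult_less_0_iff)
      have "(s' - c) * (real (snd u) - real (snd z)) < 0" using uj cs' by (simp add: mult_pos_neg)
      then have "gv u s' < gv z s'" using gv_diff[of u s' z c] neg by simp
      then have uW: "u \<in> W" using uF by (simp add: W_def)
      have pu: "dd u > 0" "D u > 0" using Wprop[OF uW] by auto
      have "dd u - (c - s0) * D u < 0" using lin[of u c] neg by simp
      then have "dd u / D u < c - s0" using pu by (simp add: divide_less_eq)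
      then have "cr u < c" by (simp add: cr_def)
      moreover have "cr ws \<le> cr u" using ws(2) uW by blast
      ultimately show False by (simp add: c_def)
    qed
  qed
  have wsc: "ws \<in> act c" using eqc act_gv[OF zc] ws(1) by (simp add: act_def W_def)
  have "ws \<noteq> z" using p by (auto simp: D_def)
  then have "bp c" using zc wsc by (auto simp: bp_def)
  then show False using nb cs0 cs' by blast
qed

lemma phi_single:
  assumes z: "z \<in> act s" and nb: "\<not> bp s"
  shows "\<exists>d>0. \<forall>t. \<bar>t - s\<bar> < d \<longrightarrow> phi t = gv z t"
proof -
  obtain d where d: "d > 0" "\<forall>t. \<bar>t - s\<bar> < d \<longrightarrow> (\<forall>w\<in>F - act s. gv z t < gv w t)"
    using LOC[OF z] by blast
  have "phi t = gv z t" if t: "\<bar>t - s\<bar> < d" for t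
  proof -
    obtain w where w: "w \<in> F" "gv w t = phi t" using phi_ex by blast
    have "w = z"
    proof (rule ccontr)
      assume "w \<noteq> z"
      then have "w \<notin> act s" using nb z by (auto simp: bp_def)
      then have "w \<in> F - act s" using w by blast
      then have "gv z t < gv w t" using d(2) t by blast
      then show False using phi_le[OF act_F[OF z], of t] w by simp
    qed
    then show ?thesis using w by simp
  qed
  with d show ?thesis by blast
qed

lemma diff_iff:
  fixes f :: "real \<Rightarrow> real"
  assumes fe: "\<forall>t>0. f t = phi t" and s: "s > 0"
  shows "f differentiable (at s) \<longleftrightarrow> \<not> bp s"
proof
  assume b: "\<not> bp s"
  obtain z where z: "z \<in> act s" using act_ne by blast
  obtain d where d: "d > 0" "\<forall>t. \<bar>t - s\<bar> < d \<longrightarrow> phi t = gv z t" using phi_single[OF z b] by blast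
  have ev: "eventually (\<lambda>t. f t = gv z t) (nhds s)"
    unfolding eventually_nhds_metric dist_real_def
    using d s fe by (intro exI[of _ "min d s"]) auto
  have "(gv z has_real_derivative real (snd z)) (at s)"
    unfolding gv_def by (auto intro!: derivative_eq_intros)
  then have "(f has_real_derivative real (snd z)) (at s)"
    using DERIV_cong_ev[OF refl ev refl] by simp
  then show "f differentiable (at s)" using real_differentiable_def by blast
next
  assume dif: "f differentiable (at s)"
  show "\<not> bp s"
  proof
  assume b: "bp s"
  obtain u where u: "u \<in> act s" "\<forall>x\<in>act s. snd x \<le> snd u" using act_maxj by blast
  obtain w where w: "w \<in> act s" "\<forall>x\<in>act s. snd w \<le> snd x" using act_minj by blast
  obtain z1 z2 where z: "z1 \<in> act s" "z2 \<in> act s" "z1 \<noteq> z2" using b by (auto simp: bp_def)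
  have "snd z1 \<noteq> snd z2" using act_inj z by blast
  then have j: "snd w < snd u"
  proof -
    assume ne: "snd z1 \<noteq> snd z2"
    have "snd w \<le> snd z1" "snd w \<le> snd z2" "snd z1 \<le> snd u" "snd z2 \<le> snd u" using u w z by auto
    then show ?thesis using ne by linarith
  qed
  obtain D where D: "(f has_real_derivative D) (at s)" using dif real_differentiable_def by blast
  have fs: "f s = gv u s" "f s = gv w s" using fe s u w by (auto simp: act_gv)
  have fle: "f t \<le> gv x t" if "t > 0" "x \<in> F" for t x using fe that phi_le by auto
  have uF: "u \<in> F" "w \<in> F" using u w act_F by auto
  have r: "((\<lambda>t. (f t - f s) / (t - s)) \<longlongrightarrow> D) (at_right s)"
    using has_field_derivative_at_within[OF D, of "{s<..}"] has_field_derivative_iff by blast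
  have l: "((\<lambda>t. (f t - f s) / (t - s)) \<longlongrightarrow> D) (at_left s)"
    using has_field_derivative_at_within[OF D, of "{..<s}"] has_field_derivative_iff by blast
  have "eventually (\<lambda>t. (f t - f s) / (t - s) \<le> real (snd w)) (at_right s)"
  proof -
    have "eventually (\<lambda>t. t \<in> {s<..<s+1}) (at_right s)" by (rule eventually_at_right_real) simp
    then show ?thesis
    proof (rule eventually_mono)
      fix t assume t: "t \<in> {s<..<s+1}"
      then have "f t - f s \<le> gv w t - gv w s" using fle[of t w] fs s uF by auto
      also have "\<dots> = (t - s) * real (snd w)" by (simp add: gv_def algebra_simps)
      finally show "(f t - f s) / (t - s) \<le> real (snd w)" using t by (simp add: divide_le_eq mult.commute)
    qed
  qed
  then have D1: "D \<le> real (snd w)" using tendsto_upperbound[OF r] by simp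
  have "eventually (\<lambda>t. real (snd u) \<le> (f t - f s) / (t - s)) (at_left s)"
  proof -
    have "eventually (\<lambda>t. t \<in> {0<..<s}) (at_left s)" by (rule eventually_at_left_real) (simp add: s)
    then show ?thesis
    proof (rule eventually_mono)
      fix t assume t: "t \<in> {0<..<s}"
      then have "f t - f s \<le> gv u t - gv u s" using fle[of t u] fs uF by auto
      also have "\<dots> = (t - s) * real (snd u)" by (simp add: gv_def algebra_simps)
      finally show "real (snd u) \<le> (f t - f s) / (t - s)" using t by (simp add: le_divide_eq mult.commute)
    qed
  qed
  then have D2: "real (snd u) \<le> D" using tendsto_lowerbound[OF l] by simp
  from D1 D2 j show False by simp
  qed
qed


definition emb :: "nat \<times> nat \<Rightarrow> real \<times> real" where
  "emb z = (real (fst z), real (snd z))"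
definition Qd :: "nat \<times> nat \<Rightarrow> (real \<times> real) set" where
  "Qd z = {(real (fst z) + u, real (snd z) + v) | u v. u \<ge> 0 \<and> v \<ge> 0}"
definition PP :: "(real \<times> real) set" where
  "PP = convex hull (\<Union>z\<in>F. Qd z)"
definition Lf :: "real \<Rightarrow> real \<times> real \<Rightarrow> real" where
  "Lf s y = fst y + s * snd y"

lemma inner_Lf: "inner (1, s) y = Lf s y"
  by (cases y) (simp add: Lf_def)

lemma Lf_comb: "Lf s (c *\<^sub>R p + d *\<^sub>R q) = c * Lf s p + d * Lf s q"
  by (simp add: Lf_def algebra_simps)

lemma Qd_PP: "z \<in> F \<Longrightarrow> y \<in> Qd z \<Longrightarrow> y \<in> PP"
  unfolding PP_def by (rule hull_inc) blast

lemma emb_Qd: "emb z \<in> Qd z"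
  unfolding emb_def Qd_def by force

lemma Qd_I: "a \<ge> 0 \<Longrightarrow> b \<ge> 0 \<Longrightarrow> (real (fst z) + a, real (snd z) + b) \<in> Qd z"
  unfolding Qd_def by blast

lemma PP_shift:
  assumes y: "y \<in> PP" and a: "a \<ge> 0" and b: "b \<ge> 0"
  shows "y + (a, b) \<in> PP"
proof -
  let ?T = "\<Union>z\<in>F. Qd z"
  have "(\<lambda>x. (a, b) + x) ` ?T \<subseteq> ?T"
  proof
    fix x assume "x \<in> (\<lambda>x. (a, b) + x) ` ?T"
    then obtain z u v where "z \<in> F" "u \<ge> 0" "v \<ge> 0" "x = (a, b) + (real (fst z) + u, real (snd z) + v)"
      unfolding Qd_def by blast
    then show "x \<in> ?T" using a b Qd_I[of "a + u" "b + v" z] by (auto simp: algebra_simps)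
  qed
  then have "convex hull ((\<lambda>x. (a, b) + x) ` ?T) \<subseteq> PP"
    unfolding PP_def by (rule hull_mono)
  moreover have "(a, b) + y \<in> convex hull ((\<lambda>x. (a, b) + x) ` ?T)"
    unfolding convex_hull_translation using y PP_def by blast
  ultimately have "(a, b) + y \<in> PP" by blast
  then show ?thesis by (simp add: add.commute)
qed

lemma not_extreme:
  assumes "x extreme_point_of S" "a \<in> S" "b \<in> S" "a \<noteq> b" "x = midpoint a b"
  shows False
  using assms midpoint_in_open_segment[of a b] unfolding extreme_point_of_def by blast

lemma D1:
  assumes st: "strict z s" and s: "s > 0"
  shows "emb z extreme_point_of PP"
proof -
  let ?T = "\<Union>z\<in>F. Qd z"
  define m where "m = gv z s"
  define e where "e = emb z"
  define U where "U = ?T - {e}"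
  have zF: "z \<in> F" using st by (simp add: strict_def)
  have Lfe: "Lf s e = m" by (simp add: Lf_def e_def emb_def m_def gv_def)
  have UH: "U \<subseteq> {y. inner (1, s) y > m}"
  proof
    fix y assume "y \<in> U"
    then obtain w a b where w: "w \<in> F" "a \<ge> 0" "b \<ge> 0" "y = (real (fst w) + a, real (snd w) + b)" "y \<noteq> e"
      unfolding U_def Qd_def by blast
    have "Lf s y = gv w s + (a + s * b)" using w by (simp add: Lf_def gv_def algebra_simps)
    moreover have "m < gv w s + (a + s * b)"
    proof (cases "w = z")
      case True
      then have "a \<noteq> 0 \<or> b \<noteq> 0" using w by (auto simp: e_def emb_def)
      then have "a + s * b > 0" using w s by (auto simp: add_pos_nonneg add_nonneg_pos)
      then show ?thesis using True by (simp add: m_def)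
    next
      case False
      then have "m < gv w s" using st w by (simp add: strict_def m_def)
      moreover have "a + s * b \<ge> 0" using w s by simp
      ultimately show ?thesis by simp
    qed
    ultimately have "m < Lf s y" by simp
    then show "y \<in> {y. inner (1, s) y > m}" by (simp add: inner_Lf)
  qed
  have "convex hull U \<subseteq> {y. inner (1, s) y > m}"
    using UH convex_halfspace_gt[of m "(1, s)"] by (rule hull_minimal)
  then have hU: "q \<in> convex hull U \<Longrightarrow> Lf s q > m" for q by (auto simp: inner_Lf)
  have "e + (1, 0) \<in> U"
    using zF Qd_I[of 1 0 z] by (auto simp: U_def e_def emb_def)
  then have Une: "U \<noteq> {}" by blast
  have Teq: "?T = insert e U" using zF emb_Qd[of z] by (auto simp: U_def e_def)
  have PPeq: "PP = {x. \<exists>u\<ge>0. \<exists>v\<ge>0. \<exists>b. u + v = 1 \<and> b \<in> convex hull U \<and> x = u *\<^sub>R e + v *\<^sub>R b}"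
    unfolding PP_def Teq by (rule convex_hull_insert[OF Une])
  have key: "m \<le> Lf s y \<and> (Lf s y = m \<longrightarrow> y = e)" if y: "y \<in> PP" for y
  proof -
    obtain u v q where uv: "u \<ge> 0" "v \<ge> 0" "u + v = 1" "q \<in> convex hull U" "y = u *\<^sub>R e + v *\<^sub>R q"
      using y PPeq by blast
    have q: "Lf s q > m" using hU uv(4) by blast
    have L: "Lf s y = u * m + v * Lf s q" using uv(5) Lfe by (simp add: Lf_comb)
    have u1: "u = 1 - v" using uv(3) by simp
    have dif: "Lf s y - m = v * (Lf s q - m)" using L by (simp add: u1 algebra_simps)
    have "v * (Lf s q - m) \<ge> 0" using q uv(2) by simp
    then have ge: "m \<le> Lf s y" using dif by simp
    have "Lf s y = m \<longrightarrow> y = e"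
    proof
      assume eq: "Lf s y = m"
      then have "v * (Lf s q - m) = 0" using dif by simp
      then have "v = 0" using q by simp
      then show "y = e" using uv by simp
    qed
    with ge show ?thesis by blast
  qed
  have eP: "e \<in> PP" unfolding PP_def using zF emb_Qd[of z] by (intro hull_inc) (auto simp: e_def)
  show ?thesis
    unfolding extreme_point_of_def e_def[symmetric]
  proof (intro conjI ballI eP)
    fix a b assume a: "a \<in> PP" and b: "b \<in> PP"
    show "e \<notin> open_segment a b"
    proof
      assume "e \<in> open_segment a b"
      then obtain t where t: "a \<noteq> b" "0 < t" "t < 1" "e = (1 - t) *\<^sub>R a + t *\<^sub>R b"
        by (auto simp: in_segment)
      have "Lf s e = (1 - t) * Lf s a + t * Lf s b" using t(4) by (simp add: Lf_comb)
      then have sum0: "(1 - t) * (Lf s a - m) + t * (Lf s b - m) = 0" using Lfe by (simp add: algebra_simps)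
      have "m \<le> Lf s a" "m \<le> Lf s b" using key a b by auto
      then have "(1 - t) * (Lf s a - m) \<ge> 0" "t * (Lf s b - m) \<ge> 0" using t(2,3) by simp_all
      then have "(1 - t) * (Lf s a - m) = 0" "t * (Lf s b - m) = 0" using sum0 by linarith+
      then have "Lf s a = m \<and> Lf s b = m" using t(2,3) by simp
      then have "a = e" "b = e" using key[OF a] key[OF b] by auto
      then show False using t(1) by simp
    qed
  qed
qed


lemma mid_pair: "midpoint (a1::real, a2::real) (b1, b2) = ((a1 + b1) / 2, (a2 + b2) / 2)"
  by (simp add: midpoint_def)

lemma D2:
  assumes x: "x extreme_point_of PP"
  shows "\<exists>z\<in>V. x = emb z"
proof -
  have "x \<in> (\<Union>z\<in>F. Qd z)" using x unfolding PP_def by (rule extreme_point_of_convex_hull)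
  then obtain z a b where z: "z \<in> F" "a \<ge> 0" "b \<ge> 0" "x = (real (fst z) + a, real (snd z) + b)"
    unfolding Qd_def by blast
  have eP: "emb z \<in> PP" using Qd_PP[OF z(1) emb_Qd] .
  have ab: "a = 0 \<and> b = 0"
  proof (rule ccontr)
    assume nab: "\<not> (a = 0 \<and> b = 0)"
    have e2: "(real (fst z) + 2 * a, real (snd z) + 2 * b) \<in> PP"
      using z Qd_PP[OF z(1) Qd_I[of "2*a" "2*b" z]] by simp
    show False
      by (rule not_extreme[OF x eP e2]) (use nab z in \<open>auto simp: emb_def mid_pair\<close>)
  qed
  then have xe: "x = emb z" using z by (simp add: emb_def)
  have "z \<in> V"
  proof (rule ccontr)
    assume nV: "z \<notin> V"
    show False
    proof (cases "\<exists>w\<in>F. w \<noteq> z \<and> fst w \<le> fst z \<and> snd w \<le> snd z")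
      case True
      then obtain w where w: "w \<in> F" "w \<noteq> z" "fst w \<le> fst z" "snd w \<le> snd z" by blast
      have wP: "emb w \<in> PP" using Qd_PP[OF w(1) emb_Qd] .
      have "(real (fst w) + 2 * (real (fst z) - real (fst w)), real (snd w) + 2 * (real (snd z) - real (snd w))) \<in> PP"
        using w by (intro Qd_PP[OF w(1) Qd_I]) auto
      moreover have "emb w \<noteq> (real (fst w) + 2 * (real (fst z) - real (fst w)), real (snd w) + 2 * (real (snd z) - real (snd w)))"
        using w(2) by (auto simp: emb_def prod_eq_iff)
      ultimately show False
        by (intro not_extreme[OF x wP]) (auto simp: xe emb_def mid_pair)
    next
      case False
      then have nd: "\<And>w. w \<in> F \<Longrightarrow> w \<noteq> z \<Longrightarrow> fst z < fst w \<or> snd z < snd w" by force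
      define A where "A = real (fst z)"
      define B where "B = real (snd z)"
      define L where "L = {l\<in>F. snd z < snd l \<and> fst l < fst z}"
      define R where "R = {r\<in>F. snd r < snd z}"
      define al where "al = (\<lambda>l::nat\<times>nat. (A - real (fst l)) / (real (snd l) - B))"
      define be where "be = (\<lambda>r::nat\<times>nat. (real (fst r) - A) / (B - real (snd r)))"
      have Rp: "fst z < fst r" if "r \<in> R" for r using nd[of r] that by (auto simp: R_def)
      show False
      proof (cases "\<forall>l\<in>L. \<forall>r\<in>R. al l < be r")
        case True
        have "finite (al ` L)" "finite (be ` R)" using finF by (auto simp: L_def R_def)
        moreover have "\<forall>a\<in>al ` L. \<forall>b\<in>be ` R. a < b" using True by auto
        moreover have "\<forall>b\<in>be ` R. 0 < b"
          using Rp by (auto simp: be_def R_def A_def B_def intro!: divide_pos_pos)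
        ultimately obtain s where s: "s > 0" "\<forall>l\<in>L. al l < s" "\<forall>r\<in>R. s < be r"
          using interval_lemma by (metis (no_types, lifting) image_eqI)
        have "strict z s" unfolding strict_def
        proof (intro conjI ballI impI z(1))
          fix w assume w: "w \<in> F" "w \<noteq> z"
          show "gv z s < gv w s"
          proof (cases "snd w < snd z")
            case True
            then have wR: "w \<in> R" using w by (simp add: R_def)
            have d: "B - real (snd w) > 0" using True by (simp add: B_def)
            have "s < (real (fst w) - A) / (B - real (snd w))" using s(3) wR by (simp add: be_def)
            then have "s * (B - real (snd w)) < real (fst w) - A" using d by (simp add: less_divide_eq)
            then show ?thesis by (simp add: gv_def A_def B_def algebra_simps)
          next
            case False
            show ?thesis
            proof (cases "snd w = snd z")
              case True
              then have "fst z < fst w" using nd[OF w] by simp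
              then show ?thesis using True by (simp add: gv_def)
            next
              case False2: False
              then have wj: "snd z < snd w" using False by simp
              show ?thesis
              proof (cases "fst w < fst z")
                case True
                then have wL: "w \<in> L" using w wj by (simp add: L_def)
                have d: "real (snd w) - B > 0" using wj by (simp add: B_def)
                have "(A - real (fst w)) / (real (snd w) - B) < s" using s(2) wL by (simp add: al_def)
                then have "A - real (fst w) < s * (real (snd w) - B)" using d by (simp add: divide_less_eq)
                then show ?thesis by (simp add: gv_def A_def B_def algebra_simps)
              next
                case False
                then have "real (fst z) \<le> real (fst w)" by simp
                moreover have "s * real (snd z) < s * real (snd w)" using wj s(1) by simp
                ultimately show ?thesis by (simp add: gv_def)
              qed
            qed
          qed
        qed
        then show False using nV s(1) by (auto simp: V_def)
      next
        case False
        then obtain l r where l: "l \<in> L" and r: "r \<in> R" and ge: "be r \<le> al l" by force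
        define li where "li = real (fst l)"
        define lj where "lj = real (snd l)"
        define ri where "ri = real (fst r)"
        define rj where "rj = real (snd r)"
        have c: "lj > B" "li < A" "rj < B" "ri > A"
          using l r Rp[OF r] by (auto simp: L_def R_def li_def lj_def ri_def rj_def A_def B_def)
        have lF: "l \<in> F" "r \<in> F" using l r by (auto simp: L_def R_def)
        define lam where "lam = (lj - B) / (lj - rj)"
        have lam: "0 < lam" "lam < 1" using c by (auto simp: lam_def divide_less_eq)
        define y where "y = (1 - lam) *\<^sub>R emb l + lam *\<^sub>R emb r"
        have lrP: "emb l \<in> PP" "emb r \<in> PP" using lF Qd_PP emb_Qd by auto
        have yP: "y \<in> PP"
          unfolding y_def using lrP lam unfolding PP_def
          by (intro convexD[OF convex_convex_hull]) auto
        have lamj: "lam * (lj - rj) = lj - B" using c by (simp add: lam_def)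
        have ysnd: "snd y = B" unfolding y_def using lamj
          by (simp add: emb_def lj_def[symmetric] rj_def[symmetric] algebra_simps)
        have yfst: "fst y = li + lam * (ri - li)" unfolding y_def
          by (simp add: emb_def li_def[symmetric] ri_def[symmetric] algebra_simps)
        have "(ri - A) / (B - rj) \<le> (A - li) / (lj - B)"
          using ge by (simp add: al_def be_def li_def lj_def ri_def rj_def)
        then have key: "(ri - A) * (lj - B) \<le> (A - li) * (B - rj)" using c
          by (simp add: divide_le_eq le_divide_eq mult.commute)
        have "(lj - B) * (ri - li) = (lj - B) * (ri - A) + (lj - B) * (A - li)" by (simp add: algebra_simps)
        also have "\<dots> \<le> (A - li) * (B - rj) + (A - li) * (lj - B)" using key by (simp add: mult.commute)
        also have "\<dots> = (A - li) * (lj - rj)" by (simp add: algebra_simps)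
        finally have "(lj - B) * (ri - li) \<le> (A - li) * (lj - rj)" .
        then have "lam * (ri - li) \<le> A - li" using c
          by (simp add: lam_def divide_le_eq mult.commute)
        then have yA: "fst y \<le> A" using yfst by simp
        show False
        proof (cases "fst y = A")
          case True
          then have "x = y" using ysnd xe by (simp add: emb_def A_def B_def prod_eq_iff)
          moreover have "emb l \<noteq> emb r" using c by (auto simp: emb_def lj_def rj_def)
          ultimately have "x \<in> open_segment (emb l) (emb r)"
            unfolding in_segment using lam y_def by blast
          moreover have "emb l \<in> PP" "emb r \<in> PP" using lF Qd_PP emb_Qd by auto
          ultimately show False using x unfolding extreme_point_of_def by blast
        next
          case False
          define y2 where "y2 = y + (2 * (A - fst y), 0)"
          have y2P: "y2 \<in> PP" unfolding y2_def using yA by (intro PP_shift yP) auto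
          have "y \<noteq> y2" using False yA by (auto simp: y2_def prod_eq_iff)
          moreover have "x = midpoint y y2"
            using ysnd xe by (cases y) (simp add: y2_def emb_def mid_pair A_def B_def)
          ultimately show False by (intro not_extreme[OF x yP y2P])
        qed
      qed
    qed
  qed
  with xe show ?thesis by blast
qed


lemma pieces:
  fixes f :: "real \<Rightarrow> real"
  assumes fe: "\<forall>s>0. f s = phi s"
  shows "\<exists>(t :: nat \<Rightarrow> real) (\<sigma> :: nat \<Rightarrow> real) (\<beta> :: nat \<Rightarrow> real) (N :: nat).
         N = Suc (card {(u, w). cons u w \<and> sval u w > 1}) \<and>
         t 0 = 1 \<and> (\<forall>m. Suc m < N \<longrightarrow> t m < t (Suc m)) \<and>
         (\<forall>m < N. \<sigma> m \<in> \<rat> \<and>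
            (\<forall>s. t m \<le> s \<and> (Suc m < N \<longrightarrow> s \<le> t (Suc m)) \<longrightarrow> f s = \<sigma> m * s + \<beta> m)) \<and>
         (\<forall>m. Suc m < N \<longrightarrow> \<sigma> m \<noteq> \<sigma> (Suc m))"
proof -
  define E1 where "E1 = {(u, w). cons u w \<and> sval u w > 1}"
  define B where "B = {s. 1 < s \<and> bp s}"
  have BE: "B = (\<lambda>(u, w). sval u w) ` E1"
  proof
    show "B \<subseteq> (\<lambda>(u, w). sval u w) ` E1"
    proof
      fix s assume "s \<in> B"
      then have s: "1 < s" "bp s" by (auto simp: B_def)
      have "\<exists>u w. cons u w \<and> s = sval u w" using BP1[of s] s by simp
      then obtain u w where uw: "cons u w" "s = sval u w" by blast
      then have "(u, w) \<in> E1" using s by (simp add: E1_def)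
      then show "s \<in> (\<lambda>(u, w). sval u w) ` E1" using uw by (intro image_eqI[of _ _ "(u, w)"]) auto
    qed
  next
    show "(\<lambda>(u, w). sval u w) ` E1 \<subseteq> B" using cons_bp by (auto simp: E1_def B_def)
  qed
  have E1V: "E1 \<subseteq> V \<times> V" by (auto simp: E1_def cons_def)
  have "V \<subseteq> F" using V_F by blast
  then have finV: "finite V" using finF by (rule finite_subset)
  have finE1: "finite E1" using E1V finV by (intro finite_subset[OF E1V]) simp
  have injE: "inj_on (\<lambda>(u, w). sval u w) E1"
    by (auto simp: inj_on_def E1_def dest: cons_inj)
  have cardB: "card B = card E1" using BE injE by (simp add: card_image)
  have finB: "finite B" using BE finE1 by simp
  obtain bs where bs: "sorted_wrt (<) bs" "set bs = B"
    using ex1_sorted_list_for_set_if_finite[OF finB] by blast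
  have lenbs: "length bs = card B"
    using bs by (metis distinct_card strict_sorted_iff)
  define N where "N = Suc (length bs)"
  define t where "t = (\<lambda>m. if m = 0 then (1::real) else bs ! (m - 1))"
  define z where "z = (\<lambda>m. SOME z. z \<in> act (t m) \<and> (\<forall>w\<in>act (t m). snd z \<le> snd w))"
  have zp: "z m \<in> act (t m) \<and> (\<forall>w\<in>act (t m). snd (z m) \<le> snd w)" for m
  proof -
    have "\<exists>z. z \<in> act (t m) \<and> (\<forall>w\<in>act (t m). snd z \<le> snd w)" using act_minj[of "t m"] by blast
    then show ?thesis unfolding z_def by (rule someI_ex)
  qed
  have bsB: "k < length bs \<Longrightarrow> 1 < bs ! k \<and> bp (bs ! k)" for k
    using bs(2) nth_mem[of k bs] by (auto simp: B_def)
  have t1: "m < N \<Longrightarrow> 1 \<le> t m" for m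
  proof -
    assume m: "m < N"
    show ?thesis
    proof (cases "m = 0")
      case False
      then have "m - 1 < length bs" using m by (simp add: N_def)
      then show ?thesis using bsB[of "m - 1"] False by (simp add: t_def)
    qed (simp add: t_def)
  qed
  have tinc: "Suc m < N \<Longrightarrow> t m < t (Suc m)" for m
  proof -
    assume m: "Suc m < N"
    show ?thesis
    proof (cases m)
      case 0 then show ?thesis using bsB[of 0] m by (simp add: t_def N_def)
    next
      case (Suc k)
      then show ?thesis using m sorted_wrt_nth_less[OF bs(1), of k m] by (simp add: t_def N_def)
    qed
  qed
  have sorted_le: "i \<le> j \<Longrightarrow> j < length bs \<Longrightarrow> bs ! i \<le> bs ! j" for i j
    using sorted_wrt_nth_less[OF bs(1), of i j] by (cases "i = j") auto
  have inpiece: "z m \<in> act s" if m: "m < N" and s: "t m \<le> s" "Suc m < N \<longrightarrow> s \<le> t (Suc m)" for m s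
  proof (rule act_persist[OF _ _ s(1)])
    show "z m \<in> act (t m)" "\<forall>w\<in>act (t m). snd (z m) \<le> snd w" using zp by auto
    show "\<forall>c. t m < c \<and> c < s \<longrightarrow> \<not> bp c"
    proof (intro allI impI notI)
      fix c assume c: "t m < c \<and> c < s" and b: "bp c"
      then have "c \<in> B" using t1[OF m] by (auto simp: B_def)
      then obtain k where k: "k < length bs" "c = bs ! k" using bs(2) by (metis in_set_conv_nth)
      have mk: "m \<le> k"
      proof (cases m)
        case 0 then show ?thesis by simp
      next
        case (Suc m')
        have "bs ! m' < bs ! k" using c k Suc by (simp add: t_def)
        then have "\<not> k \<le> m'" using sorted_le[of k m'] k m Suc by (auto simp: N_def)
        then show ?thesis using Suc by simp
      qed
      show False
      proof (cases "Suc m < N")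
        case True
        then have "bs ! m \<le> bs ! k" using sorted_le[OF mk k(1)] by simp
        moreover have "s \<le> bs ! m" using s(2) True by (simp add: t_def)
        ultimately show False using c k by simp
      next
        case False
        then show False using mk k m by (simp add: N_def)
      qed
    qed
  qed
  define \<sigma> where "\<sigma> = (\<lambda>m. real (snd (z m)))"
  define \<beta> where "\<beta> = (\<lambda>m. real (fst (z m)))"
  have P1: "\<forall>m < N. \<sigma> m \<in> \<rat> \<and>
            (\<forall>s. t m \<le> s \<and> (Suc m < N \<longrightarrow> s \<le> t (Suc m)) \<longrightarrow> f s = \<sigma> m * s + \<beta> m)"
  proof (intro allI impI conjI)
    fix m assume m: "m < N"
    show "\<sigma> m \<in> \<rat>" by (simp add: \<sigma>_def)
    fix s assume s: "t m \<le> s \<and> (Suc m < N \<longrightarrow> s \<le> t (Suc m))"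
    then have "z m \<in> act s" using inpiece m by blast
    moreover have "s > 0" using s t1[OF m] by simp
    ultimately show "f s = \<sigma> m * s + \<beta> m" using fe by (simp add: act_gv[symmetric] gv_def \<sigma>_def \<beta>_def)
  qed
  have P2: "\<forall>m. Suc m < N \<longrightarrow> \<sigma> m \<noteq> \<sigma> (Suc m)"
  proof (intro allI impI notI)
    fix m assume m: "Suc m < N" and eq: "\<sigma> m = \<sigma> (Suc m)"
    define b where "b = t (Suc m)"
    have bb: "bp b" using bsB[of m] m by (simp add: b_def t_def N_def)
    have zm: "z m \<in> act b" using inpiece[of m b] m tinc[OF m] by (simp add: b_def)
    have zs: "z (Suc m) \<in> act b" "\<forall>w\<in>act b. snd (z (Suc m)) \<le> snd w" using zp[of "Suc m"] by (auto simp: b_def)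
    have same: "z m = z (Suc m)" using act_inj[OF zm zs(1)] eq by (simp add: \<sigma>_def)
    obtain x1 x2 where xx: "x1 \<in> act b" "x2 \<in> act b" "x1 \<noteq> x2" using bb unfolding bp_def by blast
    have "\<exists>w. w \<in> act b \<and> w \<noteq> z (Suc m)"
    proof (cases "x1 = z (Suc m)")
      case True then show ?thesis using xx by blast
    next
      case False then show ?thesis using xx by blast
    qed
    then obtain w where w: "w \<in> act b" "w \<noteq> z (Suc m)" by blast
    have "snd (z (Suc m)) \<noteq> snd w" using act_inj[OF zs(1) w(1)] w(2) by auto
    then have wj: "snd (z (Suc m)) < snd w" using zs(2) w(1) by (simp add: order_le_neq_trans)
    define s' where "s' = (t m + b) / 2"
    have s': "t m \<le> s'" "s' < b" using tinc[OF m] by (auto simp: s'_def b_def)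
    have "z m \<in> act s'" using inpiece[of m s'] m s' by (simp add: b_def)
    then have le: "gv (z m) s' \<le> gv w s'" using act_gv phi_le[OF act_F[OF w(1)], of s'] by simp
    have "(s' - b) * (real (snd w) - real (snd (z m))) < 0"
      using s' wj same by (simp add: mult_neg_pos)
    then have "gv w s' < gv (z m) s'" using gv_diff[of w s' "z m" b] act_gv[OF w(1)] act_gv[OF zm] by simp
    then show False using le by simp
  qed
  show ?thesis
    apply (rule exI[of _ t], rule exI[of _ \<sigma>], rule exI[of _ \<beta>], rule exI[of _ N])
    using P1 P2 tinc lenbs cardB by (simp add: N_def t_def E1_def)
qed


lemma phi_Inf:
  assumes sub: "F \<subseteq> S" and dom: "\<forall>z\<in>S. \<exists>w\<in>F. fst w \<le> fst z \<and> snd w \<le> snd z" and s: "s \<ge> 0"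
  shows "Inf {real i + s * real j | i j. (i, j) \<in> S} = phi s"
proof (rule cInf_eq_minimum)
  obtain z where z: "z \<in> F" "gv z s = phi s" using phi_ex by blast
  then show "phi s \<in> {real i + s * real j | i j. (i, j) \<in> S}"
    using sub by (intro CollectI exI[of _ "fst z"] exI[of _ "snd z"]) (auto simp: gv_def)
next
  fix y assume "y \<in> {real i + s * real j | i j. (i, j) \<in> S}"
  then obtain i j where ij: "(i, j) \<in> S" "y = real i + s * real j" by blast
  obtain w where w: "w \<in> F" "fst w \<le> i" "snd w \<le> j" using dom ij(1) by force
  have "phi s \<le> gv w s" using w(1) by (rule phi_le)
  also have "\<dots> \<le> y" using w s unfolding gv_def ij(2) by (intro add_mono mult_left_mono) auto
  finally show "phi s \<le> y" .
qed

lemma PP_S: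
  assumes sub: "F \<subseteq> S" and dom: "\<forall>z\<in>S. \<exists>w\<in>F. fst w \<le> fst z \<and> snd w \<le> snd z"
  shows "convex hull (\<Union>(i, j) \<in> S. {(real i + u, real j + v) | u v. u \<ge> 0 \<and> v \<ge> 0}) = PP"
proof -
  have "(\<Union>(i, j) \<in> S. {(real i + u, real j + v) | u v. u \<ge> 0 \<and> v \<ge> 0}) = (\<Union>z\<in>F. Qd z)"
  proof
    show "(\<Union>(i, j) \<in> S. {(real i + u, real j + v) | u v. u \<ge> 0 \<and> v \<ge> 0}) \<subseteq> (\<Union>z\<in>F. Qd z)"
    proof
      fix x assume "x \<in> (\<Union>(i, j) \<in> S. {(real i + u, real j + v) | u v. u \<ge> 0 \<and> v \<ge> 0})"
      then obtain i j u v where x: "(i, j) \<in> S" "u \<ge> 0" "v \<ge> 0" "x = (real i + u, real j + v)" by blast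
      obtain w where w: "w \<in> F" "fst w \<le> i" "snd w \<le> j" using dom x(1) by force
      have "x = (real (fst w) + (real i - real (fst w) + u), real (snd w) + (real j - real (snd w) + v))"
        using x by simp
      moreover have "\<dots> \<in> Qd w" using w x by (intro Qd_I) auto
      ultimately show "x \<in> (\<Union>z\<in>F. Qd z)" using w(1) by blast
    qed
  next
    show "(\<Union>z\<in>F. Qd z) \<subseteq> (\<Union>(i, j) \<in> S. {(real i + u, real j + v) | u v. u \<ge> 0 \<and> v \<ge> 0})"
      using sub unfolding Qd_def by force
  qed
  then show ?thesis by (simp add: PP_def)
qed

lemma vertices: "{x. x extreme_point_of PP} = emb ` V"
proof
  show "{x. x extreme_point_of PP} \<subseteq> emb ` V" using D2 by blast
  show "emb ` V \<subseteq> {x. x extreme_point_of PP}" using D1 by (auto simp: V_def)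
qed

lemma emb_inj: "emb u = emb w \<Longrightarrow> u = w"
  by (auto simp: emb_def prod_eq_iff)

lemma edges:
  "{(a, b). a \<in> emb ` V \<and> b \<in> emb ` V \<and> fst a < fst b \<and> \<not> (\<exists>c \<in> emb ` V. fst a < fst c \<and> fst c < fst b)}
   = (\<lambda>(u, w). (emb u, emb w)) ` {(u, w). cons u w}"
  by (auto simp: cons_def emb_def image_iff)

lemma slope_cons:
  assumes "cons u w"
  shows "edge_slope (emb u, emb w) = - 1 / sval u w \<and> - 1 / edge_slope (emb u, emb w) = sval u w
     \<and> (edge_slope (emb u, emb w) > -1 \<longleftrightarrow> sval u w > 1)"
proof -
  have j: "snd w < snd u" using assms by (rule cons_j)
  have i: "fst u < fst w" using assms by (simp add: cons_def)
  define a where "a = real (fst w) - real (fst u)"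
  define b where "b = real (snd u) - real (snd w)"
  have ab: "a > 0" "b > 0" using i j by (auto simp: a_def b_def)
  have e0: "edge_slope (emb u, emb w) = (- b) / a" unfolding edge_slope_def emb_def a_def b_def by simp
  then have e: "edge_slope (emb u, emb w) = - (b / a)" by simp
  have sv: "sval u w = a / b" by (simp add: sval_def a_def b_def)
  have "- (b / a) > -1 \<longleftrightarrow> a / b > 1" using ab by (simp add: divide_less_eq less_divide_eq)
  then show ?thesis using e sv ab by simp
qed

lemma phi_mono: "x \<le> y \<Longrightarrow> phi x \<le> phi y"
proof -
  assume xy: "x \<le> y"
  obtain z where z: "z \<in> F" "gv z y = phi y" using phi_ex by blast
  have "phi x \<le> gv z x" using z(1) by (rule phi_le)
  also have "\<dots> \<le> gv z y" using xy by (simp add: gv_def mult_right_mono)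
  finally show ?thesis using z by simp
qed

lemma phi_concave: "(1 - t) * phi x + t * phi y \<le> phi ((1 - t) * x + t * y)" if "0 \<le> t" "t \<le> 1"
proof -
  obtain z where z: "z \<in> F" "gv z ((1 - t) * x + t * y) = phi ((1 - t) * x + t * y)" using phi_ex by blast
  have "(1 - t) * phi x \<le> (1 - t) * gv z x" using that phi_le[OF z(1)] by (simp add: mult_left_mono)
  moreover have "t * phi y \<le> t * gv z y" using that phi_le[OF z(1)] by (simp add: mult_left_mono)
  moreover have "(1 - t) * gv z x + t * gv z y = gv z ((1 - t) * x + t * y)" by (simp add: gv_def algebra_simps)
  ultimately show ?thesis using z(2) by linarith
qed

end

theorem proposition3p7:
  fixes \<xi> :: "complex fps" and p q :: "complex poly poly"
  assumes C: "curve_branch \<xi>"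
    and reg: "eval_O q \<noteq> 0"
    and nz: "p \<noteq> 0"
  shows
    "(continuous_on {1..} (v1 \<xi> p q) \<and>
      mono_on {1..} (v1 \<xi> p q) \<and>
      concave_on {1..} (v1 \<xi> p q) \<and>
      finite (NP_edges \<xi> p q) \<and>
      (\<exists>(t :: nat \<Rightarrow> real) (\<sigma> :: nat \<Rightarrow> real) (\<beta> :: nat \<Rightarrow> real) (N :: nat).
         N = Suc (card {e \<in> NP_edges \<xi> p q. edge_slope e > -1}) \<and>
         t 0 = 1 \<and> (\<forall>m. Suc m < N \<longrightarrow> t m < t (Suc m)) \<and>
         (\<forall>m < N. \<sigma> m \<in> \<rat> \<and>
            (\<forall>s. t m \<le> s \<and> (Suc m < N \<longrightarrow> s \<le> t (Suc m)) \<longrightarrow> v1 \<xi> p q s = \<sigma> m * s + \<beta> m)) \<and>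
         (\<forall>m. Suc m < N \<longrightarrow> \<sigma> m \<noteq> \<sigma> (Suc m))))
     \<and> (\<forall>s > 1. \<not> (v1 \<xi> p q) differentiable (at s) \<longleftrightarrow>
            (\<exists>e \<in> NP_edges \<xi> p q. s = - 1 / edge_slope e))
     \<and> (restrict_C \<xi> p \<noteq> 0 \<longrightarrow>
            (\<exists>S. \<forall>s \<ge> S. v1 \<xi> p q s = real (int_mult_smooth \<xi> p q)))"
proof -
  have x0: "fps_nth \<xi> 0 = 0" using C by (simp add: curve_branch_def)
  define A where "A = C_expansion \<xi> p q"
  have QA: "C_subst \<xi> q * A = C_subst \<xi> p" using C_expansion_eq[OF x0 reg] by (simp add: A_def)
  have Anz: "A \<noteq> 0" using QA C_subst_nz[OF nz] by auto
  define S where "S = {(i, j). C_coeff \<xi> p q i j \<noteq> 0}"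
  have Sm: "(i, j) \<in> S \<longleftrightarrow> fps_nth (fps_nth A j) i \<noteq> 0" for i j
    by (simp add: S_def C_coeff_def A_def)
  obtain j0 where "fps_nth A j0 \<noteq> 0" using Anz fps_nonzero_nth by blast
  then obtain i0 where "fps_nth (fps_nth A j0) i0 \<noteq> 0" using fps_nonzero_nth by blast
  then have z0: "(i0, j0) \<in> S" using Sm by simp
  obtain zL where zL: "zL \<in> S" "\<forall>z. z \<in> S \<longrightarrow> fst zL \<le> fst z"
    using ex_has_least_nat[of "\<lambda>z. z \<in> S" "(i0, j0)" fst] z0 by blast
  obtain zB where zB: "zB \<in> S" "\<forall>z. z \<in> S \<longrightarrow> snd zB \<le> snd z"
    using ex_has_least_nat[of "\<lambda>z. z \<in> S" "(i0, j0)" snd] z0 by blast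
  define F where "F = {z \<in> S. fst z \<le> fst zB \<and> snd z \<le> snd zL}"
  have sub: "F \<subseteq> S" by (auto simp: F_def)
  have "F \<subseteq> {..fst zB} \<times> {..snd zL}" by (auto simp: F_def)
  then have finF: "finite F" by (rule finite_subset) simp
  have "fst zL \<le> fst zB" using zL(2) zB(1) by blast
  then have zLF: "zL \<in> F" using zL(1) by (simp add: F_def)
  have "snd zB \<le> snd zL" using zB(2) zL(1) by blast
  then have zBF: "zB \<in> F" using zB(1) by (simp add: F_def)
  have dom: "\<forall>z\<in>S. \<exists>w\<in>F. fst w \<le> fst z \<and> snd w \<le> snd z"
  proof
    fix z assume z: "z \<in> S"
    show "\<exists>w\<in>F. fst w \<le> fst z \<and> snd w \<le> snd z"
    proof (cases "z \<in> F")
      case True then show ?thesis by blast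
    next
      case False
      then have "fst zB < fst z \<or> snd zL < snd z" using z by (auto simp: F_def)
      then show ?thesis
      proof
        assume a: "fst zB < fst z"
        have "snd zB \<le> snd z" using zB(2) z by blast
        then show ?thesis using zBF a by (intro bexI[of _ zB]) auto
      next
        assume a: "snd zL < snd z"
        have "fst zL \<le> fst z" using zL(2) z by blast
        then show ?thesis using zLF a by (intro bexI[of _ zL]) auto
      qed
    qed
  qed
  interpret NPF F using finF zLF by unfold_locales auto
  have v1eq: "\<forall>s>0. v1 \<xi> p q s = phi s"
  proof (intro allI impI)
    fix s :: real assume "s > 0"
    then have "Inf {real i + s * real j | i j. (i, j) \<in> S} = phi s" using phi_Inf[OF sub dom] by simp
    then show "v1 \<xi> p q s = phi s" by (simp add: v1_def S_def)
  qed
  have NPV: "NP_vertices \<xi> p q = emb ` V"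
  proof -
    have "newton_polyhedron \<xi> p q = PP"
      unfolding newton_polyhedron_def S_def[symmetric] using PP_S[OF sub dom] by simp
    then show ?thesis unfolding NP_vertices_def using vertices by simp
  qed
  have NPE: "NP_edges \<xi> p q = (\<lambda>(u, w). (emb u, emb w)) ` {(u, w). cons u w}"
    unfolding NP_edges_def NPV using edges by simp
  have "V \<subseteq> F" using V_F by blast
  then have finV: "finite V" using finF by (rule finite_subset)
  have "{(u, w). cons u w} \<subseteq> V \<times> V" by (auto simp: cons_def)
  moreover have "finite (V \<times> V)" using finV by simp
  ultimately have finC: "finite {(u, w). cons u w}" by (rule finite_subset)
  have finE: "finite (NP_edges \<xi> p q)" unfolding NPE using finC by simp
  have cardeq: "card {e \<in> NP_edges \<xi> p q. edge_slope e > -1} = card {(u, w). cons u w \<and> sval u w > 1}"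
  proof -
    have "{e \<in> NP_edges \<xi> p q. edge_slope e > -1} = (\<lambda>(u, w). (emb u, emb w)) ` {(u, w). cons u w \<and> sval u w > 1}"
    proof (intro equalityI subsetI)
      fix e assume "e \<in> {e \<in> NP_edges \<xi> p q. edge_slope e > -1}"
      then obtain u w where uw: "cons u w" "e = (emb u, emb w)" "edge_slope e > -1"
        unfolding NPE by auto
      then have "edge_slope (emb u, emb w) > -1" by simp
      then have "sval u w > 1" using slope_cons[OF uw(1)] by blast
      then show "e \<in> (\<lambda>(u, w). (emb u, emb w)) ` {(u, w). cons u w \<and> sval u w > 1}"
        using uw by (intro image_eqI[of _ _ "(u, w)"]) auto
    next
      fix e assume "e \<in> (\<lambda>(u, w). (emb u, emb w)) ` {(u, w). cons u w \<and> sval u w > 1}"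
      then obtain u w where uw: "cons u w" "e = (emb u, emb w)" "sval u w > 1" by auto
      then have "edge_slope (emb u, emb w) > -1" using slope_cons[OF uw(1)] by blast
      then have "edge_slope e > -1" using uw(2) by simp
      moreover have "e \<in> NP_edges \<xi> p q" unfolding NPE using uw by (intro image_eqI[of _ _ "(u, w)"]) auto
      ultimately show "e \<in> {e \<in> NP_edges \<xi> p q. edge_slope e > -1}" by blast
    qed
    moreover have "inj_on (\<lambda>(u, w). (emb u, emb w)) {(u, w). cons u w \<and> sval u w > 1}"
      by (auto simp: inj_on_def dest: emb_inj)
    ultimately show ?thesis by (simp add: card_image)
  qed
  have P_cont: "continuous_on {1..} (v1 \<xi> p q)"
  proof -
    have "continuous_on {1..} (v1 \<xi> p q) \<longleftrightarrow> continuous_on {1..} phi"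
      using v1eq by (intro continuous_on_cong) auto
    then show ?thesis using phi_cont by simp
  qed
  have P_mono: "mono_on {1..} (v1 \<xi> p q)"
    by (rule mono_onI) (use v1eq phi_mono in auto)
  have P_conc: "concave_on {1..} (v1 \<xi> p q)"
    unfolding concave_on_def
  proof (rule convex_onI)
    fix t x y :: real assume t: "t > 0" "t < 1" and xy: "x \<in> {1..}" "y \<in> {1..}"
    have "(1 - t) * x + t * y \<ge> (1 - t) * 1 + t * 1" using t xy
      by (intro add_mono mult_left_mono) auto
    then have pos: "(1 - t) * x + t * y > 0" by simp
    show "- v1 \<xi> p q ((1 - t) *\<^sub>R x + t *\<^sub>R y) \<le> (1 - t) * - v1 \<xi> p q x + t * - v1 \<xi> p q y"
      using phi_concave[of t x y] t xy v1eq pos by simp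
  qed simp
  have P_pieces: "\<exists>(t :: nat \<Rightarrow> real) (\<sigma> :: nat \<Rightarrow> real) (\<beta> :: nat \<Rightarrow> real) (N :: nat).
         N = Suc (card {e \<in> NP_edges \<xi> p q. edge_slope e > -1}) \<and>
         t 0 = 1 \<and> (\<forall>m. Suc m < N \<longrightarrow> t m < t (Suc m)) \<and>
         (\<forall>m < N. \<sigma> m \<in> \<rat> \<and>
            (\<forall>s. t m \<le> s \<and> (Suc m < N \<longrightarrow> s \<le> t (Suc m)) \<longrightarrow> v1 \<xi> p q s = \<sigma> m * s + \<beta> m)) \<and>
         (\<forall>m. Suc m < N \<longrightarrow> \<sigma> m \<noteq> \<sigma> (Suc m))"
    unfolding cardeq by (rule pieces[OF v1eq])
  have P_diff: "\<forall>s > 1. \<not> (v1 \<xi> p q) differentiable (at s) \<longleftrightarrow>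
            (\<exists>e \<in> NP_edges \<xi> p q. s = - 1 / edge_slope e)"
  proof (intro allI impI)
    fix s :: real assume s: "s > 1"
    have "\<not> (v1 \<xi> p q) differentiable (at s) \<longleftrightarrow> bp s" using diff_iff[OF v1eq, of s] s by simp
    also have "\<dots> \<longleftrightarrow> (\<exists>u w. cons u w \<and> s = sval u w)"
    proof
      assume "bp s" then show "\<exists>u w. cons u w \<and> s = sval u w" using BP1[of s] s by simp
    next
      assume "\<exists>u w. cons u w \<and> s = sval u w"
      then obtain u w where "cons u w" "s = sval u w" by blast
      then show "bp s" using cons_bp by simp
    qed
    also have "\<dots> \<longleftrightarrow> (\<exists>e \<in> NP_edges \<xi> p q. s = - 1 / edge_slope e)"
    proof
      assume "\<exists>u w. cons u w \<and> s = sval u w"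
      then obtain u w where uw: "cons u w" "s = sval u w" by blast
      have "(emb u, emb w) \<in> NP_edges \<xi> p q" unfolding NPE using uw by (intro image_eqI[of _ _ "(u, w)"]) auto
      moreover have "s = - 1 / edge_slope (emb u, emb w)" using slope_cons[OF uw(1)] uw(2) by argo
      ultimately show "\<exists>e \<in> NP_edges \<xi> p q. s = - 1 / edge_slope e" by blast
    next
      assume "\<exists>e \<in> NP_edges \<xi> p q. s = - 1 / edge_slope e"
      then obtain e where e: "e \<in> NP_edges \<xi> p q" "s = - 1 / edge_slope e" by blast
      then obtain u w where uw: "cons u w" "e = (emb u, emb w)" unfolding NPE by auto
      then have "s = - 1 / edge_slope (emb u, emb w)" using e(2) by simp
      then have "s = sval u w" using slope_cons[OF uw(1)] by argo
      then show "\<exists>u w. cons u w \<and> s = sval u w" using uw by blast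
    qed
    finally show "\<not> (v1 \<xi> p q) differentiable (at s) \<longleftrightarrow> (\<exists>e \<in> NP_edges \<xi> p q. s = - 1 / edge_slope e)" .
  qed
  have P_int: "restrict_C \<xi> p \<noteq> 0 \<longrightarrow> (\<exists>S. \<forall>s \<ge> S. v1 \<xi> p q s = real (int_mult_smooth \<xi> p q))"
  proof
    assume rp: "restrict_C \<xi> p \<noteq> 0"
    define A0 where "A0 = fps_nth A 0"
    define U where "U = restrict_C \<xi> q"
    have UA: "U * A0 = restrict_C \<xi> p"
      using arg_cong[OF QA, of "\<lambda>X. fps_nth X 0"] by (simp add: C_subst_nth0 U_def A0_def)
    have "fps_nth U 0 \<noteq> 0" using restrict_C_nth0[OF x0, of q] reg by (simp add: U_def)
    then have Unz: "U \<noteq> 0" by auto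
    have A0nz: "A0 \<noteq> 0" using UA rp by auto
    have im: "int_mult_smooth \<xi> p q = subdegree A0"
      unfolding int_mult_smooth_def U_def[symmetric] UA[symmetric] using Unz by simp
    define d where "d = subdegree A0"
    have dS: "fps_nth A0 d \<noteq> 0" using A0nz by (simp add: d_def)
    have below: "i < d \<Longrightarrow> fps_nth A0 i = 0" for i by (auto simp: d_def)
    have "v1 \<xi> p q s = real d" if s: "s \<ge> real d" for s
      unfolding v1_def
    proof (rule cInf_eq_minimum)
      show "real d \<in> {real i + s * real j |i j. C_coeff \<xi> p q i j \<noteq> 0}"
        using dS by (intro CollectI exI[of _ d] exI[of _ 0]) (simp add: C_coeff_def A_def[symmetric] A0_def)
    next
      fix y assume "y \<in> {real i + s * real j |i j. C_coeff \<xi> p q i j \<noteq> 0}"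
      then obtain i j where ij: "C_coeff \<xi> p q i j \<noteq> 0" "y = real i + s * real j" by blast
      show "real d \<le> y"
      proof (cases "j = 0")
        case True
        then have "fps_nth A0 i \<noteq> 0" using ij by (simp add: C_coeff_def A_def[symmetric] A0_def)
        then have "d \<le> i" using below by (meson not_less)
        then show ?thesis using ij True by simp
      next
        case False
        have s0: "s \<ge> 0" using s by (meson of_nat_0_le_iff order_trans)
        have "s * 1 \<le> s * real j" using False s0 by (intro mult_left_mono) auto
        then show ?thesis using ij s by simp
      qed
    qed
    then show "\<exists>S. \<forall>s \<ge> S. v1 \<xi> p q s = real (int_mult_smooth \<xi> p q)" using im d_def by auto
  qed
  show ?thesis using P_cont P_mono P_conc finE P_pieces P_diff P_int by blast
qed

end
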